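(* For a $d$-dimensional state ensemble $\Omega=\{(p_j,\rho_j)\}_{j=0}^{k-1}$, \[ P_{\mathrm{suc},\mathcal{M}_{\mathcal{I}}}(\Omega)=\widetilde{P}_{\mathrm{suc,SIO}}(\Omega)\ \big(=\widetilde{P}_{\mathrm{suc,DIO}}(\Omega)\big). \]
   Context: $\mathcal{M}_{\mathcal{I}}$ is the set of incoherent measurements: POVMs $\{E_m\}$ with $\Delta(E_m)=E_m$ for all $m$, where $\Delta(\rho)=\sum_i|i\rangle\langle i|\rho|i\rangle\langle i|$ is complete dephasing in the computational basis; $P_{\mathrm{suc},\mathcal{M}_{\mathcal{I}}}(\Omega)=\max_{\{E_j\}\in\mathcal{M}_{\mathcal{I}}}\sum_jp_j\mathrm{tr}(E_j\rho_j)$. For a set of free operations $\mathcal{O}$, $\widetilde{P}_{\mathrm{suc},\mathcal{O}}(\Omega)=\sup\sum_jp_j\mathrm{tr}[\mathcal{N}_{A\to BA'}(\rho_j)(|j\rangle\langle j|_B\otimes I_{A'})]$ over $\mathcal{N}_{A\to BA'}\in\mathcal{O}$, $\dim B=k$, $A'\cong A$. DIO are channels commuting with $\Delta$; SIO (strictly incoherent operations) are channels with Kraus operators $\{K_n\}$ such that both $\{K_n\}$ and $\{K_n^\dagger\}$ map incoherent states to (unnormalized) incoherent states; SIO $\subsetneq$ DIO. *)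

theory Defs
  imports "Jordan_Normal_Form.Matrix" "Jordan_Normal_Form.Schur_Decomposition"
begin

definition mtrace :: "complex mat \<Rightarrow> complex" where
  "mtrace A = (\<Sum>i<dim_row A. A $$ (i, i))"

definition psd :: "nat \<Rightarrow> complex mat \<Rightarrow> bool" where
  "psd n A \<longleftrightarrow> A \<in> carrier_mat n n \<and>
     (\<forall>v. (\<Sum>i<n. \<Sum>j<n. cnj (v i) * A $$ (i, j) * v j) \<in> \<real> \<and>
          Re (\<Sum>i<n. \<Sum>j<n. cnj (v i) * A $$ (i, j) * v j) \<ge> 0)"

definition density :: "nat \<Rightarrow> complex mat \<Rightarrow> bool" where
  "density n \<rho> \<longleftrightarrow> psd n \<rho> \<and> mtrace \<rho> = 1"

definition dephase :: "nat \<Rightarrow> complex mat \<Rightarrow> complex mat" where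
  "dephase n A = mat n n (\<lambda>(i, j). if i = j then A $$ (i, j) else 0)"

definition incoherent_state :: "nat \<Rightarrow> complex mat \<Rightarrow> bool" where
  "incoherent_state n \<rho> \<longleftrightarrow> density n \<rho> \<and> dephase n \<rho> = \<rho>"

definition msum :: "nat \<Rightarrow> complex mat list \<Rightarrow> complex mat" where
  "msum n As = foldr (+) As (0\<^sub>m n n)"

definition ensemble :: "nat \<Rightarrow> nat \<Rightarrow> (nat \<Rightarrow> real) \<Rightarrow> (nat \<Rightarrow> complex mat) \<Rightarrow> bool" where
  "ensemble d k p \<rho> \<longleftrightarrow> (\<forall>j<k. p j \<ge> 0 \<and> density d (\<rho> j)) \<and> (\<Sum>j<k. p j) = 1"

definition povm :: "nat \<Rightarrow> nat \<Rightarrow> (nat \<Rightarrow> complex mat) \<Rightarrow> bool" where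
  "povm d k E \<longleftrightarrow> (\<forall>j<k. psd d (E j)) \<and> msum d (map E [0..<k]) = 1\<^sub>m d"

definition incoherent_povm :: "nat \<Rightarrow> nat \<Rightarrow> (nat \<Rightarrow> complex mat) \<Rightarrow> bool" where
  "incoherent_povm d k E \<longleftrightarrow> povm d k E \<and> (\<forall>j<k. dephase d (E j) = E j)"

definition Psuc_MI :: "nat \<Rightarrow> nat \<Rightarrow> (nat \<Rightarrow> real) \<Rightarrow> (nat \<Rightarrow> complex mat) \<Rightarrow> real" where
  "Psuc_MI d k p \<rho> = Sup {(\<Sum>j<k. p j * Re (mtrace (E j * \<rho> j))) | E. incoherent_povm d k E}"

text \<open>Output space C^k tensor C^d, basis |b> tensor |a> has index b * d + a.
  A channel is given by a finite list of Kraus operators (k*d) x d with sum K^* K = I.\<close>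
definition kraus_channel :: "nat \<Rightarrow> nat \<Rightarrow> complex mat list \<Rightarrow> bool" where
  "kraus_channel n m Ks \<longleftrightarrow> (\<forall>K\<in>set Ks. K \<in> carrier_mat m n) \<and>
     msum n (map (\<lambda>K. mat_adjoint K * K) Ks) = 1\<^sub>m n"

definition kraus_apply :: "nat \<Rightarrow> complex mat list \<Rightarrow> complex mat \<Rightarrow> complex mat" where
  "kraus_apply m Ks X = msum m (map (\<lambda>K. K * X * mat_adjoint K) Ks)"

definition DIO :: "nat \<Rightarrow> nat \<Rightarrow> complex mat list \<Rightarrow> bool" where
  "DIO n m Ks \<longleftrightarrow> kraus_channel n m Ks \<and>
     (\<forall>X \<in> carrier_mat n n. kraus_apply m Ks (dephase n X) = dephase m (kraus_apply m Ks X))"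

definition SIO :: "nat \<Rightarrow> nat \<Rightarrow> complex mat list \<Rightarrow> bool" where
  "SIO n m Ks \<longleftrightarrow> kraus_channel n m Ks \<and>
     (\<forall>K\<in>set Ks.
        (\<forall>\<rho>. incoherent_state n \<rho> \<longrightarrow>
              dephase m (K * \<rho> * mat_adjoint K) = K * \<rho> * mat_adjoint K) \<and>
        (\<forall>\<sigma>. incoherent_state m \<sigma> \<longrightarrow>
              dephase n (mat_adjoint K * \<sigma> * K) = mat_adjoint K * \<sigma> * K))"

text \<open>|j><j|_B tensor I_{A'} on C^k tensor C^d.\<close>
definition projB :: "nat \<Rightarrow> nat \<Rightarrow> nat \<Rightarrow> complex mat" where
  "projB k d j = mat (k * d) (k * d) (\<lambda>(a, b). if a = b \<and> a div d = j then 1 else 0)"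

definition Psuc_tilde ::
  "(nat \<Rightarrow> nat \<Rightarrow> complex mat list \<Rightarrow> bool) \<Rightarrow> nat \<Rightarrow> nat \<Rightarrow> (nat \<Rightarrow> real) \<Rightarrow> (nat \<Rightarrow> complex mat) \<Rightarrow> real" where
  "Psuc_tilde Ops d k p \<rho> =
     Sup {(\<Sum>j<k. p j * Re (mtrace (kraus_apply (k * d) Ks (\<rho> j) * projB k d j))) | Ks. Ops d (k * d) Ks}"

end

theory Submission
  imports Defs
begin

lemma split_sum: "(\<Sum>c<k*d. g c) = (\<Sum>j<k. \<Sum>i<d. g (j*d+i :: nat))"
proof -
  have "(\<Sum>c<k*d. g c) = (\<Sum>j<k. sum g {j*d..<j*d+d})"
    using sum.nat_group[of g d k] by simp
  also have "\<dots> = (\<Sum>j<k. \<Sum>i<d. g (j*d+i))"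
  proof (rule sum.cong[OF refl])
    fix j
    show "sum g {j*d..<j*d+d} = (\<Sum>i<d. g (j*d+i))"
      by (rule sum.reindex_bij_witness[where j="\<lambda>c. c - j*d" and i="\<lambda>i. j*d+i"]) auto
  qed
  finally show ?thesis .
qed

lemma msum_carrier_idx:
  assumes "\<forall>A\<in>set As. A \<in> carrier_mat n n"
  shows "msum n As \<in> carrier_mat n n \<and> (\<forall>i<n. \<forall>j<n. msum n As $$ (i,j) = (\<Sum>A\<leftarrow>As. A $$ (i,j)))"
  using assms unfolding msum_def
proof (induction As)
  case Nil then show ?case by auto
next
  case (Cons A As)
  then show ?case by auto
qed

lemma adj_carrier: "K \<in> carrier_mat m n \<Longrightarrow> mat_adjoint K \<in> carrier_mat n m"
  unfolding mat_adjoint_def by auto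

lemma adj_idx: "K \<in> carrier_mat m n \<Longrightarrow> i < n \<Longrightarrow> j < m \<Longrightarrow> mat_adjoint K $$ (i,j) = cnj (K $$ (j,i))"
  unfolding mat_adjoint_def by (auto simp: mat_of_rows_def)

lemma mult3_idx:
  assumes "K \<in> carrier_mat m n" "X \<in> carrier_mat n n" "a < m" "b < m"
  shows "(K * X * mat_adjoint K) $$ (a,b) = (\<Sum>x<n. \<Sum>y<n. K$$(a,x) * X$$(x,y) * cnj (K$$(b,y)))"
proof -
  have "(K * X * mat_adjoint K) $$ (a,b) = (\<Sum>y<n. (\<Sum>x<n. K$$(a,x) * X$$(x,y)) * cnj (K$$(b,y)))"
    using assms adj_carrier[OF assms(1)]
    by (simp add: index_mult_mat scalar_prod_def adj_idx atLeast0LessThan del: assoc_mult_mat)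
  also have "\<dots> = (\<Sum>x<n. \<Sum>y<n. K$$(a,x) * X$$(x,y) * cnj (K$$(b,y)))"
    unfolding sum_distrib_right by (rule sum.swap)
  finally show ?thesis .
qed

lemma mult3'_idx:
  assumes "K \<in> carrier_mat m n" "S \<in> carrier_mat m m" "x < n" "y < n"
  shows "(mat_adjoint K * S * K) $$ (x,y) = (\<Sum>a<m. \<Sum>b<m. cnj (K$$(a,x)) * S$$(a,b) * K$$(b,y))"
proof -
  have "(mat_adjoint K * S * K) $$ (x,y) = (\<Sum>b<m. (\<Sum>a<m. cnj (K$$(a,x)) * S$$(a,b)) * K$$(b,y))"
    using assms adj_carrier[OF assms(1)]
    by (simp add: index_mult_mat scalar_prod_def adj_idx atLeast0LessThan del: assoc_mult_mat)
  also have "\<dots> = (\<Sum>a<m. \<Sum>b<m. cnj (K$$(a,x)) * S$$(a,b) * K$$(b,y))"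
    unfolding sum_distrib_right by (rule sum.swap)
  finally show ?thesis .
qed

lemma sum_single: "(\<Sum>i<(N::nat). if i = x \<and> P i then c else 0) = (if x < N \<and> P x then c else (0::'a::comm_monoid_add))"
proof -
  have "(\<Sum>i<(N::nat). if i = x \<and> P i then c else 0) = (\<Sum>i<(N::nat). if i = x then (if P x then c else 0) else (0::'a))"
    by (rule sum.cong) auto
  also have "\<dots> = (if x < N then (if P x then c else 0) else 0)"
    by (subst sum.delta) auto
  finally show ?thesis by simp
qed

lemma mtrace_projB:
  assumes "A \<in> carrier_mat (k*d) (k*d)"
  shows "mtrace (A * projB k d j) = (\<Sum>a<k*d. if a div d = j then A $$ (a,a) else 0)"
  using assms unfolding mtrace_def projB_def
  by (auto simp: index_mult_mat scalar_prod_def atLeast0LessThan if_distrib sum_single cong: if_cong intro!: sum.cong)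

lemma suml_nth: "(\<Sum>K\<leftarrow>Ks. f K) = (\<Sum>i<length Ks. f (Ks ! i))"
  by (simp add: sum_list_sum_nth atLeast0LessThan)

lemma mult2_idx:
  assumes "K \<in> carrier_mat m n" "x < n" "y < n"
  shows "(mat_adjoint K * K) $$ (x,y) = (\<Sum>a<m. cnj (K$$(a,x)) * K$$(a,y))"
  using assms adj_carrier[OF assms(1)]
  by (simp add: index_mult_mat scalar_prod_def adj_idx atLeast0LessThan)

lemma three_carrier: "K \<in> carrier_mat m n \<Longrightarrow> X \<in> carrier_mat n n \<Longrightarrow> K * X * mat_adjoint K \<in> carrier_mat m m"
  using adj_carrier by (metis mult_carrier_mat)

lemma kraus_apply_idx:
  assumes "\<forall>K\<in>set Ks. K \<in> carrier_mat m n" "X \<in> carrier_mat n n" "a < m" "b < m"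
  shows "kraus_apply m Ks X \<in> carrier_mat m m"
    "kraus_apply m Ks X $$ (a,b) = (\<Sum>i<length Ks. \<Sum>x<n. \<Sum>y<n. (Ks!i)$$(a,x) * X$$(x,y) * cnj ((Ks!i)$$(b,y)))"
proof -
  have c: "\<forall>A\<in>set (map (\<lambda>K. K * X * mat_adjoint K) Ks). A \<in> carrier_mat m m"
    using assms(1,2) by (auto intro!: three_carrier simp del: assoc_mult_mat)
  show "kraus_apply m Ks X \<in> carrier_mat m m" unfolding kraus_apply_def using msum_carrier_idx[OF c] by simp
  have "kraus_apply m Ks X $$ (a,b) = (\<Sum>K\<leftarrow>Ks. (K * X * mat_adjoint K) $$ (a,b))"
    unfolding kraus_apply_def using msum_carrier_idx[OF c] assms by (simp add: comp_def)
  also have "\<dots> = (\<Sum>i<length Ks. ((Ks!i) * X * mat_adjoint (Ks!i)) $$ (a,b))" by (rule suml_nth)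
  also have "\<dots> = (\<Sum>i<length Ks. \<Sum>x<n. \<Sum>y<n. (Ks!i)$$(a,x) * X$$(x,y) * cnj ((Ks!i)$$(b,y)))"
    using assms by (intro sum.cong refl mult3_idx) auto
  finally show "kraus_apply m Ks X $$ (a,b) = (\<Sum>i<length Ks. \<Sum>x<n. \<Sum>y<n. (Ks!i)$$(a,x) * X$$(x,y) * cnj ((Ks!i)$$(b,y)))" .
qed

lemma kraus_apply_carrier:
  assumes "\<forall>K\<in>set Ks. K \<in> carrier_mat m n" "X \<in> carrier_mat n n"
  shows "kraus_apply m Ks X \<in> carrier_mat m m"
proof -
  have c: "\<forall>A\<in>set (map (\<lambda>K. K * X * mat_adjoint K) Ks). A \<in> carrier_mat m m"
    using assms(1,2) by (auto intro!: three_carrier simp del: assoc_mult_mat)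
  show ?thesis unfolding kraus_apply_def using msum_carrier_idx[OF c] by simp
qed

lemma quad_real: "(\<Sum>i<n. \<Sum>j<n. cnj (v i) * A $$ (i, j) * v j) = complex_of_real r \<Longrightarrow> r \<ge> 0 \<Longrightarrow>
   (\<Sum>i<n. \<Sum>j<n. cnj (v i) * A $$ (i, j) * v j) \<in> \<real> \<and> Re (\<Sum>i<n. \<Sum>j<n. cnj (v i) * A $$ (i, j) * v j) \<ge> 0"
  by simp

lemma psd_diag:
  assumes "\<And>x. x < n \<Longrightarrow> f x \<ge> 0"
  shows "psd n (mat n n (\<lambda>(x,y). if x = y then complex_of_real (f x) else 0))"
  unfolding psd_def
proof (intro conjI allI)
  show "mat n n (\<lambda>(x, y). if x = y then complex_of_real (f x) else 0) \<in> carrier_mat n n" by simp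
  fix v :: "nat \<Rightarrow> complex"
  have "(\<Sum>i<n. \<Sum>j<n. cnj (v i) * mat n n (\<lambda>(x, y). if x = y then complex_of_real (f x) else 0) $$ (i, j) * v j)
     = (\<Sum>i<n. complex_of_real (f i * (cmod (v i))^2))"
  proof (rule sum.cong[OF refl])
    fix i assume i: "i \<in> {..<n}"
    have "(\<Sum>j<n. cnj (v i) * mat n n (\<lambda>(x, y). if x = y then complex_of_real (f x) else 0) $$ (i, j) * v j)
       = (\<Sum>j<n. if j = i then cnj (v i) * complex_of_real (f i) * v i else 0)"
      using i by (intro sum.cong refl) auto
    also have "\<dots> = cnj (v i) * complex_of_real (f i) * v i" using i by (subst sum.delta) auto
    also have "\<dots> = complex_of_real (f i * (cmod (v i))^2)"
      by (simp add: complex_norm_square[symmetric] mult_ac)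
    finally show "(\<Sum>j<n. cnj (v i) * mat n n (\<lambda>(x, y). if x = y then complex_of_real (f x) else 0) $$ (i, j) * v j) = complex_of_real (f i * (cmod (v i))^2)" .
  qed
  also have "\<dots> = complex_of_real (\<Sum>i<n. f i * (cmod (v i))^2)" by simp
  finally have eq: "(\<Sum>i<n. \<Sum>j<n. cnj (v i) * mat n n (\<lambda>(x, y). if x = y then complex_of_real (f x) else 0) $$ (i, j) * v j) = complex_of_real (\<Sum>i<n. f i * (cmod (v i))^2)" .
  have "(\<Sum>i<n. f i * (cmod (v i))^2) \<ge> 0" using assms by (intro sum_nonneg) auto
  then show "(\<Sum>i<n. \<Sum>j<n. cnj (v i) * mat n n (\<lambda>(x, y). if x = y then complex_of_real (f x) else 0) $$ (i, j) * v j) \<in> \<real>"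
    "0 \<le> Re (\<Sum>i<n. \<Sum>j<n. cnj (v i) * mat n n (\<lambda>(x, y). if x = y then complex_of_real (f x) else 0) $$ (i, j) * v j)"
    unfolding eq by auto
qed

definition Ed :: "nat \<Rightarrow> nat \<Rightarrow> complex mat list \<Rightarrow> nat \<Rightarrow> complex mat" where
  "Ed d k Ks j = mat d d (\<lambda>(x,y). if x = y then complex_of_real
      (\<Sum>i<length Ks. \<Sum>a<k*d. if a div d = j then (cmod ((Ks!i) $$ (a,x)))^2 else 0) else 0)"

lemma sum_if_out: "(if c then sum f A else 0) = sum (\<lambda>x. if c then f x else 0) A"
  by simp

lemma sum_only: "x < (N::nat) \<Longrightarrow> (\<And>y. y < N \<Longrightarrow> y \<noteq> x \<Longrightarrow> f y = 0) \<Longrightarrow> (\<Sum>y<N. f y) = (f x :: 'a::comm_monoid_add)"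
proof -
  assume a: "x < N" "\<And>y. y < N \<Longrightarrow> y \<noteq> x \<Longrightarrow> f y = 0"
  have "(\<Sum>y<N. f y) = (\<Sum>y<N. if y = x then f x else 0)" using a by (intro sum.cong) auto
  also have "\<dots> = f x" using a by (subst sum.delta) auto
  finally show ?thesis .
qed

lemma Ed_povm:
  assumes kc: "kraus_channel d (k*d) Ks"
  shows "incoherent_povm d k (Ed d k Ks)"
proof -
  have car: "\<forall>K\<in>set Ks. K \<in> carrier_mat (k*d) d" using kc unfolding kraus_channel_def by auto
  have psd: "psd d (Ed d k Ks j)" for j
    unfolding Ed_def by (rule psd_diag) (auto intro!: sum_nonneg)
  have deph: "dephase d (Ed d k Ks j) = Ed d k Ks j" for j
    by (rule eq_matI) (auto simp: dephase_def Ed_def)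
  have c1: "\<forall>A\<in>set (map (Ed d k Ks) [0..<k]). A \<in> carrier_mat d d" by (auto simp: Ed_def)
  have c2: "\<forall>A\<in>set (map (\<lambda>K. mat_adjoint K * K) Ks). A \<in> carrier_mat d d"
    using car adj_carrier by (auto intro!: mult_carrier_mat)
  have one: "msum d (map (\<lambda>K. mat_adjoint K * K) Ks) = 1\<^sub>m d" using kc unfolding kraus_channel_def by auto
  have "msum d (map (Ed d k Ks) [0..<k]) = 1\<^sub>m d"
  proof (rule eq_matI)
    show "dim_row (msum d (map (Ed d k Ks) [0..<k])) = dim_row (1\<^sub>m d)"
      "dim_col (msum d (map (Ed d k Ks) [0..<k])) = dim_col (1\<^sub>m d)"
      using msum_carrier_idx[OF c1] by auto
    fix x y assume xy: "x < dim_row (1\<^sub>m d)" "y < dim_col (1\<^sub>m d)"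
    then have x: "x < d" "y < d" by auto
    have "msum d (map (Ed d k Ks) [0..<k]) $$ (x,y) = (\<Sum>j<k. Ed d k Ks j $$ (x,y))"
      using msum_carrier_idx[OF c1] x by (simp add: suml_nth comp_def)
    also have "\<dots> = 1\<^sub>m d $$ (x,y)"
    proof (cases "x = y")
      case False then show ?thesis using x by (simp add: Ed_def)
    next
      case True
      have "(\<Sum>j<k. Ed d k Ks j $$ (x,y)) = complex_of_real (\<Sum>j<k. \<Sum>i<length Ks. \<Sum>a<k*d. if a div d = j then (cmod ((Ks!i) $$ (a,x)))^2 else 0)"
        unfolding True using x by (simp add: Ed_def)
      also have "(\<Sum>j<k. \<Sum>i<length Ks. \<Sum>a<k*d. if a div d = j then (cmod ((Ks!i) $$ (a,x)))^2 else 0)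
          = (\<Sum>i<length Ks. \<Sum>a<k*d. \<Sum>j<k. if a div d = j then (cmod ((Ks!i) $$ (a,x)))^2 else 0)"
        by (rule trans[OF sum.swap], rule sum.cong[OF refl], rule sum.swap)
      also have "\<dots> = (\<Sum>i<length Ks. \<Sum>a<k*d. (cmod ((Ks!i) $$ (a,x)))^2)"
      proof (intro sum.cong refl)
        fix i a assume a: "a \<in> {..<k*d}"
        then have "a div d < k" by (simp add: less_mult_imp_div_less)
        then show "(\<Sum>j<k. if a div d = j then (cmod ((Ks!i) $$ (a,x)))^2 else 0) = (cmod ((Ks!i) $$ (a,x)))^2"
          by (subst sum.delta') auto
      qed
      also have "complex_of_real \<dots> = (\<Sum>i<length Ks. (mat_adjoint (Ks!i) * (Ks!i)) $$ (x,x))"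
        unfolding of_real_sum
      proof (intro sum.cong refl)
        fix i assume "i \<in> {..<length Ks}"
        then have K: "Ks!i \<in> carrier_mat (k*d) d" using car by auto
        show "(\<Sum>a<k*d. complex_of_real ((cmod ((Ks!i) $$ (a,x)))^2)) = (mat_adjoint (Ks!i) * (Ks!i)) $$ (x,x)"
          unfolding mult2_idx[OF K x(1) x(1)] complex_norm_square by (simp add: mult.commute)
      qed
      also have "\<dots> = msum d (map (\<lambda>K. mat_adjoint K * K) Ks) $$ (x,x)"
        using msum_carrier_idx[OF c2] x by (simp add: suml_nth comp_def)
      also have "\<dots> = 1\<^sub>m d $$ (x,y)" using one True by simp
      finally show ?thesis .
    qed
    finally show "msum d (map (Ed d k Ks) [0..<k]) $$ (x,y) = 1\<^sub>m d $$ (x,y)" .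
  qed
  then show ?thesis unfolding incoherent_povm_def povm_def using psd deph by auto
qed

lemma Ed_val:
  assumes r: "\<rho> \<in> carrier_mat d d"
  shows "mtrace (Ed d k Ks j * \<rho>) = (\<Sum>a<k*d. \<Sum>i<length Ks. \<Sum>y<d.
            if a div d = j then (Ks!i)$$(a,y) * \<rho>$$(y,y) * cnj ((Ks!i)$$(a,y)) else 0)"
proof -
  have "mtrace (Ed d k Ks j * \<rho>) = (\<Sum>x<d. \<Sum>l<d. Ed d k Ks j $$ (x,l) * \<rho> $$ (l,x))"
    using r unfolding mtrace_def by (auto simp: Ed_def index_mult_mat scalar_prod_def atLeast0LessThan)
  also have "\<dots> = (\<Sum>x<d. Ed d k Ks j $$ (x,x) * \<rho> $$ (x,x))"
    by (intro sum.cong refl sum_only) (auto simp: Ed_def)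
  also have "\<dots> = (\<Sum>x<d. \<Sum>i<length Ks. \<Sum>a<k*d. if a div d = j then (Ks!i)$$(a,x) * \<rho>$$(x,x) * cnj ((Ks!i)$$(a,x)) else 0)"
  proof (intro sum.cong refl)
    fix x assume "x \<in> {..<d}"
    then have "Ed d k Ks j $$ (x,x) = (\<Sum>i<length Ks. \<Sum>a<k*d. if a div d = j then complex_of_real ((cmod ((Ks!i) $$ (a,x)))^2) else 0)"
      by (auto simp: Ed_def of_real_sum intro!: sum.cong simp del: of_real_power)
    then show "Ed d k Ks j $$ (x,x) * \<rho> $$ (x,x) = (\<Sum>i<length Ks. \<Sum>a<k*d. if a div d = j then (Ks!i)$$(a,x) * \<rho>$$(x,x) * cnj ((Ks!i)$$(a,x)) else 0)"
      unfolding complex_norm_square by (simp add: sum_distrib_left sum_distrib_right if_distrib mult_ac cong: if_cong)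
  qed
  also have "\<dots> = (\<Sum>i<length Ks. \<Sum>x<d. \<Sum>a<k*d. if a div d = j then (Ks!i)$$(a,x) * \<rho>$$(x,x) * cnj ((Ks!i)$$(a,x)) else 0)"
    by (rule sum.swap)
  also have "\<dots> = (\<Sum>i<length Ks. \<Sum>a<k*d. \<Sum>x<d. if a div d = j then (Ks!i)$$(a,x) * \<rho>$$(x,x) * cnj ((Ks!i)$$(a,x)) else 0)"
    by (rule sum.cong[OF refl], rule sum.swap)
  also have "\<dots> = (\<Sum>a<k*d. \<Sum>i<length Ks. \<Sum>x<d. if a div d = j then (Ks!i)$$(a,x) * \<rho>$$(x,x) * cnj ((Ks!i)$$(a,x)) else 0)"
    by (rule sum.swap)
  finally show ?thesis .
qed

lemma chan_val:
  assumes car: "\<forall>K\<in>set Ks. K \<in> carrier_mat (k*d) d" and r: "\<rho> \<in> carrier_mat d d"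
    and H: "\<And>a. a < k*d \<Longrightarrow> kraus_apply (k*d) Ks \<rho> $$ (a,a) = (\<Sum>i<length Ks. \<Sum>y<d. (Ks!i)$$(a,y) * \<rho>$$(y,y) * cnj ((Ks!i)$$(a,y)))"
  shows "mtrace (kraus_apply (k*d) Ks \<rho> * projB k d j) = mtrace (Ed d k Ks j * \<rho>)"
proof -
  have "mtrace (kraus_apply (k*d) Ks \<rho> * projB k d j) = (\<Sum>a<k*d. if a div d = j then kraus_apply (k*d) Ks \<rho> $$ (a,a) else 0)"
    by (rule mtrace_projB) (rule kraus_apply_carrier[OF car r])
  also have "\<dots> = (\<Sum>a<k*d. \<Sum>i<length Ks. \<Sum>y<d.
            if a div d = j then (Ks!i)$$(a,y) * \<rho>$$(y,y) * cnj ((Ks!i)$$(a,y)) else 0)"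
    by (intro sum.cong refl) (simp add: H sum_if_out)
  also have "\<dots> = mtrace (Ed d k Ks j * \<rho>)" using Ed_val[OF r] by simp
  finally show ?thesis .
qed

lemma DIO_H:
  assumes D: "DIO d (k*d) Ks" and r: "\<rho> \<in> carrier_mat d d" and a: "a < k*d"
  shows "kraus_apply (k*d) Ks \<rho> $$ (a,a) = (\<Sum>i<length Ks. \<Sum>y<d. (Ks!i)$$(a,y) * \<rho>$$(y,y) * cnj ((Ks!i)$$(a,y)))"
proof -
  have car: "\<forall>K\<in>set Ks. K \<in> carrier_mat (k*d) d" using D unfolding DIO_def kraus_channel_def by auto
  have dr: "dephase d \<rho> \<in> carrier_mat d d" by (simp add: dephase_def)
  have "kraus_apply (k*d) Ks \<rho> $$ (a,a) = dephase (k*d) (kraus_apply (k*d) Ks \<rho>) $$ (a,a)"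
    using a by (simp add: dephase_def)
  also have "\<dots> = kraus_apply (k*d) Ks (dephase d \<rho>) $$ (a,a)"
    using D r unfolding DIO_def by auto
  also have "\<dots> = (\<Sum>i<length Ks. \<Sum>x<d. \<Sum>y<d. (Ks!i)$$(a,x) * dephase d \<rho> $$(x,y) * cnj ((Ks!i)$$(a,y)))"
    by (rule kraus_apply_idx(2)[OF car dr a a])
  also have "\<dots> = (\<Sum>i<length Ks. \<Sum>x<d. (Ks!i)$$(a,x) * \<rho>$$(x,x) * cnj ((Ks!i)$$(a,x)))"
  proof (intro sum.cong refl)
    fix i x assume x: "x \<in> {..<d}"
    show "(\<Sum>y<d. (Ks!i)$$(a,x) * dephase d \<rho> $$(x,y) * cnj ((Ks!i)$$(a,y))) = (Ks!i)$$(a,x) * \<rho>$$(x,x) * cnj ((Ks!i)$$(a,x))"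
      using x by (subst sum_only[of x]) (auto simp: dephase_def)
  qed
  finally show ?thesis .
qed

lemma SIO_offdiag:
  assumes S: "SIO d (k*d) Ks" and K: "K \<in> set Ks" and b: "b < k*d" and xy: "x < d" "y < d" "x \<noteq> y"
  shows "cnj (K$$(b,x)) * K$$(b,y) = 0"
proof -
  let ?m = "k*d"
  have Kc: "K \<in> carrier_mat ?m d" using S K unfolding SIO_def kraus_channel_def by auto
  define \<sigma> where "\<sigma> = mat ?m ?m (\<lambda>(u,v). if u = v then complex_of_real (if u = b then 1 else 0) else 0)"
  have sc: "\<sigma> \<in> carrier_mat ?m ?m" by (simp add: \<sigma>_def)
  have "psd ?m \<sigma>" unfolding \<sigma>_def by (rule psd_diag) auto
  moreover have "mtrace \<sigma> = 1" unfolding mtrace_def \<sigma>_def using b by (simp, subst sum_only[of b]) auto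
  moreover have "dephase ?m \<sigma> = \<sigma>" unfolding \<sigma>_def by (rule eq_matI) (auto simp: dephase_def)
  ultimately have "incoherent_state ?m \<sigma>" unfolding incoherent_state_def density_def by auto
  then have eq: "dephase d (mat_adjoint K * \<sigma> * K) = mat_adjoint K * \<sigma> * K" using S K unfolding SIO_def by auto
  have "(mat_adjoint K * \<sigma> * K) $$ (x,y) = dephase d (mat_adjoint K * \<sigma> * K) $$ (x,y)" using eq by simp
  also have "\<dots> = 0" using xy by (simp add: dephase_def)
  finally have z: "(mat_adjoint K * \<sigma> * K) $$ (x,y) = 0" .
  have "(mat_adjoint K * \<sigma> * K) $$ (x,y) = (\<Sum>u<?m. \<Sum>v<?m. cnj (K$$(u,x)) * \<sigma>$$(u,v) * K$$(v,y))"
    by (rule mult3'_idx[OF Kc sc xy(1,2)])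
  also have "\<dots> = (\<Sum>u<?m. cnj (K$$(u,x)) * \<sigma>$$(u,u) * K$$(u,y))"
    by (intro sum.cong refl, subst sum_only) (auto simp: \<sigma>_def)
  also have "\<dots> = cnj (K$$(b,x)) * \<sigma>$$(b,b) * K$$(b,y)"
    using b by (subst sum_only[of b]) (auto simp: \<sigma>_def)
  also have "\<dots> = cnj (K$$(b,x)) * K$$(b,y)" using b by (simp add: \<sigma>_def)
  finally show ?thesis using z by simp
qed

lemma SIO_H:
  assumes S: "SIO d (k*d) Ks" and r: "\<rho> \<in> carrier_mat d d" and a: "a < k*d"
  shows "kraus_apply (k*d) Ks \<rho> $$ (a,a) = (\<Sum>i<length Ks. \<Sum>y<d. (Ks!i)$$(a,y) * \<rho>$$(y,y) * cnj ((Ks!i)$$(a,y)))"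
proof -
  have car: "\<forall>K\<in>set Ks. K \<in> carrier_mat (k*d) d" using S unfolding SIO_def kraus_channel_def by auto
  have "kraus_apply (k*d) Ks \<rho> $$ (a,a) = (\<Sum>i<length Ks. \<Sum>x<d. \<Sum>y<d. (Ks!i)$$(a,x) * \<rho> $$(x,y) * cnj ((Ks!i)$$(a,y)))"
    by (rule kraus_apply_idx(2)[OF car r a a])
  also have "\<dots> = (\<Sum>i<length Ks. \<Sum>x<d. (Ks!i)$$(a,x) * \<rho>$$(x,x) * cnj ((Ks!i)$$(a,x)))"
  proof (intro sum.cong refl)
    fix i x assume i: "i \<in> {..<length Ks}" and x: "x \<in> {..<d}"
    have Ki: "Ks!i \<in> set Ks" using i by auto
    show "(\<Sum>y<d. (Ks!i)$$(a,x) * \<rho> $$(x,y) * cnj ((Ks!i)$$(a,y))) = (Ks!i)$$(a,x) * \<rho>$$(x,x) * cnj ((Ks!i)$$(a,x))"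
    proof (rule sum_only)
      show "x < d" using x by simp
      fix y assume y: "y < d" "y \<noteq> x"
      have "cnj ((Ks!i)$$(a,x)) * (Ks!i)$$(a,y) = 0"
        using SIO_offdiag[OF S Ki a _ y(1)] x y by auto
      then have "(Ks!i)$$(a,x) = 0 \<or> (Ks!i)$$(a,y) = 0" by auto
      then show "(Ks!i)$$(a,x) * \<rho> $$(x,y) * cnj ((Ks!i)$$(a,y)) = 0" by auto
    qed
  qed
  finally show ?thesis .
qed

definition ev :: "nat \<Rightarrow> (nat \<Rightarrow> complex mat) \<Rightarrow> nat \<Rightarrow> real" where
  "ev d E c = Re (E (c div d) $$ (c mod d, c mod d))"

definition Kc :: "nat \<Rightarrow> nat \<Rightarrow> (nat \<Rightarrow> complex mat) \<Rightarrow> nat \<Rightarrow> complex mat" where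
  "Kc d k E c = mat (k*d) d (\<lambda>(a,b). if a = c \<and> b = c mod d then complex_of_real (sqrt (ev d E c)) else 0)"

lemma mtrace_diag:
  assumes "A \<in> carrier_mat d d" "B \<in> carrier_mat d d" "dephase d A = A"
  shows "mtrace (A * B) = (\<Sum>x<d. A$$(x,x) * B$$(x,x))"
proof -
  have "mtrace (A * B) = (\<Sum>x<d. \<Sum>l<d. A $$ (x,l) * B $$ (l,x))"
    using assms unfolding mtrace_def by (auto simp: index_mult_mat scalar_prod_def atLeast0LessThan)
  also have "\<dots> = (\<Sum>x<d. A$$(x,x) * B$$(x,x))"
  proof (intro sum.cong refl sum_only)
    fix x l assume "x \<in> {..<d}" "l < d" "l \<noteq> x"
    then have "A $$ (x,l) = dephase d A $$ (x,l)" using assms(3) by simp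
    also have "\<dots> = 0" using \<open>l < d\<close> \<open>x \<in> {..<d}\<close> \<open>l \<noteq> x\<close> by (simp add: dephase_def)
    finally show "A $$ (x,l) * B $$ (l,x) = 0" by simp
  qed auto
  finally show ?thesis .
qed

lemma psd_diag_real:
  assumes "psd d A" "i < d"
  shows "A $$ (i,i) = complex_of_real (Re (A $$ (i,i)))" "Re (A $$ (i,i)) \<ge> 0"
proof -
  define v where "v = (\<lambda>l. if l = i then (1::complex) else 0)"
  have "(\<Sum>l<d. \<Sum>m<d. cnj (v l) * A $$ (l, m) * v m) = (\<Sum>m<d. cnj (v i) * A $$ (i, m) * v m)"
    using assms(2) by (rule sum_only) (simp add: v_def)
  also have "\<dots> = cnj (v i) * A $$ (i, i) * v i"
    using assms(2) by (rule sum_only) (simp add: v_def)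
  also have "\<dots> = A $$ (i,i)" by (simp add: v_def)
  finally have eq: "(\<Sum>l<d. \<Sum>m<d. cnj (v l) * A $$ (l, m) * v m) = A $$ (i,i)" .
  have "A $$ (i,i) \<in> \<real>" "Re (A $$ (i,i)) \<ge> 0" using assms(1) unfolding psd_def eq[symmetric] by blast+
  then show "A $$ (i,i) = complex_of_real (Re (A $$ (i,i)))" "Re (A $$ (i,i)) \<ge> 0"
    by (auto simp: Reals_def)
qed

lemma sqrt_cnj: "e \<ge> 0 \<Longrightarrow> complex_of_real (sqrt e) * cnj (complex_of_real (sqrt e)) = complex_of_real e"
  by (simp flip: of_real_mult)

lemma Kc_carrier: "Kc d k E c \<in> carrier_mat (k*d) d" by (simp add: Kc_def)

lemma Kc_left:
  assumes d: "d > 0" and c: "c < k*d" and e: "ev d E c \<ge> 0" and Y: "Y \<in> carrier_mat d d"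
  shows "Kc d k E c * Y * mat_adjoint (Kc d k E c) =
     mat (k*d) (k*d) (\<lambda>(a,b). if a = c \<and> b = c then complex_of_real (ev d E c) * Y $$ (c mod d, c mod d) else 0)"
proof (rule eq_matI)
  show "dim_row (Kc d k E c * Y * mat_adjoint (Kc d k E c)) = dim_row (mat (k*d) (k*d) (\<lambda>(a,b). if a = c \<and> b = c then complex_of_real (ev d E c) * Y $$ (c mod d, c mod d) else 0))"
    "dim_col (Kc d k E c * Y * mat_adjoint (Kc d k E c)) = dim_col (mat (k*d) (k*d) (\<lambda>(a,b). if a = c \<and> b = c then complex_of_real (ev d E c) * Y $$ (c mod d, c mod d) else 0))"
    by (simp_all only: carrier_matD[OF three_carrier[OF Kc_carrier Y]] dim_row_mat dim_col_mat)
  fix a b assume ab: "a < dim_row (mat (k*d) (k*d) (\<lambda>(a,b). if a = c \<and> b = c then complex_of_real (ev d E c) * Y $$ (c mod d, c mod d) else 0))"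
     "b < dim_col (mat (k*d) (k*d) (\<lambda>(a,b). if a = c \<and> b = c then complex_of_real (ev d E c) * Y $$ (c mod d, c mod d) else 0))"
  then have a: "a < k*d" "b < k*d" by auto
  have cm: "c mod d < d" using d by simp
  have "(Kc d k E c * Y * mat_adjoint (Kc d k E c)) $$ (a,b) =
     (\<Sum>x<d. \<Sum>y<d. Kc d k E c $$(a,x) * Y$$(x,y) * cnj (Kc d k E c $$(b,y)))"
    by (rule mult3_idx[OF Kc_carrier Y a])
  also have "\<dots> = (if a = c \<and> b = c then complex_of_real (ev d E c) * Y $$ (c mod d, c mod d) else 0)"
  proof (cases "a = c \<and> b = c")
    case True
    have "(\<Sum>x<d. \<Sum>y<d. Kc d k E c $$(a,x) * Y$$(x,y) * cnj (Kc d k E c $$(b,y)))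
        = (\<Sum>y<d. Kc d k E c $$(a,c mod d) * Y$$(c mod d,y) * cnj (Kc d k E c $$(b,y)))"
      using cm a by (intro sum_only) (auto simp: Kc_def)
    also have "\<dots> = Kc d k E c $$(a,c mod d) * Y$$(c mod d,c mod d) * cnj (Kc d k E c $$(b,c mod d))"
      using cm a by (intro sum_only) (auto simp: Kc_def)
    also have "\<dots> = complex_of_real (ev d E c) * Y $$ (c mod d, c mod d)"
      using True a cm sqrt_cnj[OF e] by (simp add: Kc_def mult_ac)
    finally show ?thesis using True by simp
  next
    case False
    then show ?thesis using a by (auto simp: Kc_def intro!: sum.neutral)
  qed
  finally show "(Kc d k E c * Y * mat_adjoint (Kc d k E c)) $$ (a,b) = mat (k*d) (k*d) (\<lambda>(a,b). if a = c \<and> b = c then complex_of_real (ev d E c) * Y $$ (c mod d, c mod d) else 0) $$ (a,b)"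
    using a by simp
qed

lemma Kc_right:
  assumes d: "d > 0" and c: "c < k*d" and e: "ev d E c \<ge> 0" and S: "S \<in> carrier_mat (k*d) (k*d)"
  shows "mat_adjoint (Kc d k E c) * S * Kc d k E c =
     mat d d (\<lambda>(x,y). if x = c mod d \<and> y = c mod d then complex_of_real (ev d E c) * S $$ (c, c) else 0)"
proof (rule eq_matI)
  have car: "mat_adjoint (Kc d k E c) * S * Kc d k E c \<in> carrier_mat d d"
    using adj_carrier[OF Kc_carrier] S Kc_carrier by (metis mult_carrier_mat)
  then show "dim_row (mat_adjoint (Kc d k E c) * S * Kc d k E c) = dim_row (mat d d (\<lambda>(x,y). if x = c mod d \<and> y = c mod d then complex_of_real (ev d E c) * S $$ (c, c) else 0))"
    "dim_col (mat_adjoint (Kc d k E c) * S * Kc d k E c) = dim_col (mat d d (\<lambda>(x,y). if x = c mod d \<and> y = c mod d then complex_of_real (ev d E c) * S $$ (c, c) else 0))"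
    by auto
  fix x y assume "x < dim_row (mat d d (\<lambda>(x,y). if x = c mod d \<and> y = c mod d then complex_of_real (ev d E c) * S $$ (c, c) else 0))"
     "y < dim_col (mat d d (\<lambda>(x,y). if x = c mod d \<and> y = c mod d then complex_of_real (ev d E c) * S $$ (c, c) else 0))"
  then have xy: "x < d" "y < d" by auto
  have "(mat_adjoint (Kc d k E c) * S * Kc d k E c) $$ (x,y) =
     (\<Sum>a<k*d. \<Sum>b<k*d. cnj (Kc d k E c $$(a,x)) * S$$(a,b) * Kc d k E c $$(b,y))"
    by (rule mult3'_idx[OF Kc_carrier S xy])
  also have "\<dots> = (if x = c mod d \<and> y = c mod d then complex_of_real (ev d E c) * S $$ (c, c) else 0)"
  proof (cases "x = c mod d \<and> y = c mod d")
    case True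
    have "(\<Sum>a<k*d. \<Sum>b<k*d. cnj (Kc d k E c $$(a,x)) * S$$(a,b) * Kc d k E c $$(b,y))
        = (\<Sum>b<k*d. cnj (Kc d k E c $$(c,x)) * S$$(c,b) * Kc d k E c $$(b,y))"
      using c xy by (intro sum_only) (auto simp: Kc_def)
    also have "\<dots> = cnj (Kc d k E c $$(c,x)) * S$$(c,c) * Kc d k E c $$(c,y)"
      using c xy by (intro sum_only) (auto simp: Kc_def)
    also have "\<dots> = complex_of_real (ev d E c) * S $$ (c, c)"
      using True c xy sqrt_cnj[OF e] by (simp add: Kc_def mult_ac)
    finally show ?thesis using True by simp
  next
    case False
    then show ?thesis using xy by (auto simp: Kc_def intro!: sum.neutral)
  qed
  finally show "(mat_adjoint (Kc d k E c) * S * Kc d k E c) $$ (x,y) = mat d d (\<lambda>(x,y). if x = c mod d \<and> y = c mod d then complex_of_real (ev d E c) * S $$ (c, c) else 0) $$ (x,y)"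
    using xy by simp
qed

definition Ksc :: "nat \<Rightarrow> nat \<Rightarrow> (nat \<Rightarrow> complex mat) \<Rightarrow> complex mat list" where
  "Ksc d k E = map (Kc d k E) [0..<k*d]"

lemma divmod_simps: "i < (d::nat) \<Longrightarrow> (j*d+i) mod d = i \<and> (j*d+i) div d = j"
  by auto

lemma ev_nonneg:
  assumes P: "incoherent_povm d k E" and d: "d > 0" and c: "c < k*d"
  shows "ev d E c \<ge> 0"
proof -
  have "c div d < k" using c by (simp add: less_mult_imp_div_less)
  then have "psd d (E (c div d))" using P unfolding incoherent_povm_def povm_def by auto
  then show ?thesis unfolding ev_def using psd_diag_real(2) d by simp
qed

lemma KA:
  assumes P: "incoherent_povm d k E" and d: "d > 0" and Y: "Y \<in> carrier_mat d d" and a: "a < k*d" "b < k*d"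
  shows "kraus_apply (k*d) (Ksc d k E) Y $$ (a,b) = (if a = b then complex_of_real (ev d E a) * Y $$ (a mod d, a mod d) else 0)"
proof -
  have car: "\<forall>K\<in>set (Ksc d k E). K \<in> carrier_mat (k*d) d" by (auto simp: Ksc_def Kc_carrier)
  have "kraus_apply (k*d) (Ksc d k E) Y $$ (a,b) = (\<Sum>K\<leftarrow>Ksc d k E. (K * Y * mat_adjoint K) $$ (a,b))"
    unfolding kraus_apply_def
    using msum_carrier_idx[of "map (\<lambda>K. K * Y * mat_adjoint K) (Ksc d k E)" "k*d"] car Y a
    by (auto simp: comp_def intro!: three_carrier simp del: assoc_mult_mat)
  also have "\<dots> = (\<Sum>c<k*d. (Kc d k E c * Y * mat_adjoint (Kc d k E c)) $$ (a,b))"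
    by (simp add: suml_nth Ksc_def)
  also have "\<dots> = (\<Sum>c<k*d. if c = a \<and> a = b then complex_of_real (ev d E c) * Y $$ (c mod d, c mod d) else 0)"
    using a by (intro sum.cong refl) (auto simp: Kc_left[OF d _ ev_nonneg[OF P d] Y])
  also have "\<dots> = (if a = b then complex_of_real (ev d E a) * Y $$ (a mod d, a mod d) else 0)"
    using a by (subst sum_only[of a]) auto
  finally show ?thesis .
qed

lemma Ksc_channel:
  assumes P: "incoherent_povm d k E" and d: "d > 0"
  shows "kraus_channel d (k*d) (Ksc d k E)"
proof -
  have car: "\<forall>K\<in>set (Ksc d k E). K \<in> carrier_mat (k*d) d" by (auto simp: Ksc_def Kc_carrier)
  have c2: "\<forall>A\<in>set (map (\<lambda>K. mat_adjoint K * K) (Ksc d k E)). A \<in> carrier_mat d d"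
    using car adj_carrier by (auto intro!: mult_carrier_mat)
  have c1: "\<forall>A\<in>set (map E [0..<k]). A \<in> carrier_mat d d"
    using P unfolding incoherent_povm_def povm_def psd_def by auto
  have sumE: "msum d (map E [0..<k]) = 1\<^sub>m d" using P unfolding incoherent_povm_def povm_def by auto
  have "msum d (map (\<lambda>K. mat_adjoint K * K) (Ksc d k E)) = 1\<^sub>m d"
  proof (rule eq_matI)
    show "dim_row (msum d (map (\<lambda>K. mat_adjoint K * K) (Ksc d k E))) = dim_row (1\<^sub>m d)"
      "dim_col (msum d (map (\<lambda>K. mat_adjoint K * K) (Ksc d k E))) = dim_col (1\<^sub>m d)"
      using msum_carrier_idx[OF c2] by auto
    fix x y assume "x < dim_row (1\<^sub>m d)" "y < dim_col (1\<^sub>m d)"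
    then have x: "x < d" "y < d" by auto
    have "msum d (map (\<lambda>K. mat_adjoint K * K) (Ksc d k E)) $$ (x,y) = (\<Sum>c<k*d. (mat_adjoint (Kc d k E c) * Kc d k E c) $$ (x,y))"
      using msum_carrier_idx[OF c2] x by (simp add: suml_nth comp_def Ksc_def)
    also have "\<dots> = (\<Sum>c<k*d. if x = c mod d \<and> y = c mod d then complex_of_real (ev d E c) else 0)"
    proof (intro sum.cong refl)
      fix c assume c: "c \<in> {..<k*d}"
      have "mat_adjoint (Kc d k E c) * Kc d k E c = mat_adjoint (Kc d k E c) * 1\<^sub>m (k*d) * Kc d k E c"
        using right_mult_one_mat[OF adj_carrier[OF Kc_carrier[of d k E c]]] by simp
      then show "(mat_adjoint (Kc d k E c) * Kc d k E c) $$ (x,y) = (if x = c mod d \<and> y = c mod d then complex_of_real (ev d E c) else 0)"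
        using c x by (simp add: Kc_right[OF d _ ev_nonneg[OF P d]])
    qed
    also have "\<dots> = (\<Sum>j<k. \<Sum>i<d. if x = (j*d+i) mod d \<and> y = (j*d+i) mod d then complex_of_real (ev d E (j*d+i)) else 0)"
      by (rule split_sum)
    also have "\<dots> = (\<Sum>j<k. if x = y then E j $$ (x,x) else 0)"
    proof (intro sum.cong refl)
      fix j assume j: "j \<in> {..<k}"
      have "(\<Sum>i<d. if x = (j*d+i) mod d \<and> y = (j*d+i) mod d then complex_of_real (ev d E (j*d+i)) else 0)
          = (if x = (j*d+x) mod d \<and> y = (j*d+x) mod d then complex_of_real (ev d E (j*d+x)) else 0)"
        using x by (intro sum_only) (auto simp: divmod_simps)
      also have "\<dots> = (if x = y then E j $$ (x,x) else 0)"
      proof -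
        have "psd d (E j)" using P j unfolding incoherent_povm_def povm_def by auto
        then show ?thesis using x psd_diag_real(1)[of d "E j" x] by (auto simp: divmod_simps ev_def)
      qed
      finally show "(\<Sum>i<d. if x = (j*d+i) mod d \<and> y = (j*d+i) mod d then complex_of_real (ev d E (j*d+i)) else 0) = (if x = y then E j $$ (x,x) else 0)" .
    qed
    also have "\<dots> = 1\<^sub>m d $$ (x,y)"
    proof (cases "x = y")
      case True
      have "(\<Sum>j<k. E j $$ (x,x)) = msum d (map E [0..<k]) $$ (x,x)"
        using msum_carrier_idx[OF c1] x by (simp add: suml_nth comp_def)
      then show ?thesis using True sumE x by simp
    qed (use x in simp)
    finally show "msum d (map (\<lambda>K. mat_adjoint K * K) (Ksc d k E)) $$ (x,y) = 1\<^sub>m d $$ (x,y)" .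
  qed
  then show ?thesis unfolding kraus_channel_def using car by auto
qed

lemma Ksc_SIO:
  assumes P: "incoherent_povm d k E" and d: "d > 0"
  shows "SIO d (k*d) (Ksc d k E)"
  unfolding SIO_def
proof (intro conjI ballI allI impI)
  show "kraus_channel d (k*d) (Ksc d k E)" by (rule Ksc_channel[OF P d])
  fix K assume "K \<in> set (Ksc d k E)"
  then obtain c where c: "c < k*d" and K: "K = Kc d k E c" by (auto simp: Ksc_def)
  fix \<rho> assume "incoherent_state d \<rho>"
  then have r: "\<rho> \<in> carrier_mat d d" unfolding incoherent_state_def density_def psd_def by auto
  show "dephase (k*d) (K * \<rho> * mat_adjoint K) = K * \<rho> * mat_adjoint K"
    unfolding K Kc_left[OF d c ev_nonneg[OF P d c] r] by (rule eq_matI) (auto simp: dephase_def)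
next
  fix K assume "K \<in> set (Ksc d k E)"
  then obtain c where c: "c < k*d" and K: "K = Kc d k E c" by (auto simp: Ksc_def)
  fix \<sigma> assume "incoherent_state (k*d) \<sigma>"
  then have r: "\<sigma> \<in> carrier_mat (k*d) (k*d)" unfolding incoherent_state_def density_def psd_def by auto
  show "dephase d (mat_adjoint K * \<sigma> * K) = mat_adjoint K * \<sigma> * K"
    unfolding K Kc_right[OF d c ev_nonneg[OF P d c] r] by (rule eq_matI) (auto simp: dephase_def)
qed

lemma Ksc_DIO:
  assumes P: "incoherent_povm d k E" and d: "d > 0"
  shows "DIO d (k*d) (Ksc d k E)"
  unfolding DIO_def
proof (intro conjI ballI)
  show "kraus_channel d (k*d) (Ksc d k E)" by (rule Ksc_channel[OF P d])
  fix X :: "complex mat" assume X: "X \<in> carrier_mat d d"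
  have car: "\<forall>K\<in>set (Ksc d k E). K \<in> carrier_mat (k*d) d" by (auto simp: Ksc_def Kc_carrier)
  have DX: "dephase d X \<in> carrier_mat d d" by (simp add: dephase_def)
  have amod: "a < k*d \<Longrightarrow> a mod d < d" for a using d by simp
  have KX: "kraus_apply (k*d) (Ksc d k E) X \<in> carrier_mat (k*d) (k*d)" by (rule kraus_apply_carrier[OF car X])
  have KDX: "kraus_apply (k*d) (Ksc d k E) (dephase d X) \<in> carrier_mat (k*d) (k*d)" by (rule kraus_apply_carrier[OF car DX])
  show "kraus_apply (k*d) (Ksc d k E) (dephase d X) = dephase (k*d) (kraus_apply (k*d) (Ksc d k E) X)"
  proof (rule eq_matI)
    fix a b assume "a < dim_row (dephase (k*d) (kraus_apply (k*d) (Ksc d k E) X))"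
      "b < dim_col (dephase (k*d) (kraus_apply (k*d) (Ksc d k E) X))"
    then have ab: "a < k*d" "b < k*d" by (auto simp: dephase_def)
    have l: "kraus_apply (k*d) (Ksc d k E) (dephase d X) $$ (a,b) = (if a = b then complex_of_real (ev d E a) * dephase d X $$ (a mod d, a mod d) else 0)"
      by (rule KA[OF P d DX ab])
    have r: "kraus_apply (k*d) (Ksc d k E) X $$ (a,a) = complex_of_real (ev d E a) * X $$ (a mod d, a mod d)"
      using KA[OF P d X ab(1) ab(1)] by simp
    show "kraus_apply (k*d) (Ksc d k E) (dephase d X) $$ (a,b) = dephase (k*d) (kraus_apply (k*d) (Ksc d k E) X) $$ (a,b)"
    proof (cases "a = b")
      case True then show ?thesis unfolding l using ab r amod[OF ab(1)] by (simp add: dephase_def)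
    next
      case False then show ?thesis unfolding l using ab by (simp add: dephase_def)
    qed
  qed (use KX KDX in \<open>auto simp: dephase_def\<close>)
qed

lemma Ksc_val:
  assumes P: "incoherent_povm d k E" and d: "d > 0" and r: "\<rho> \<in> carrier_mat d d" and j: "j < k"
  shows "mtrace (kraus_apply (k*d) (Ksc d k E) \<rho> * projB k d j) = mtrace (E j * \<rho>)"
proof -
  have car: "\<forall>K\<in>set (Ksc d k E). K \<in> carrier_mat (k*d) d" by (auto simp: Ksc_def Kc_carrier)
  have pj: "psd d (E j)" and dj: "dephase d (E j) = E j" using P j unfolding incoherent_povm_def povm_def by auto
  have "mtrace (kraus_apply (k*d) (Ksc d k E) \<rho> * projB k d j) = (\<Sum>a<k*d. if a div d = j then kraus_apply (k*d) (Ksc d k E) \<rho> $$ (a,a) else 0)"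
    by (rule mtrace_projB) (rule kraus_apply_carrier[OF car r])
  also have "\<dots> = (\<Sum>a<k*d. if a div d = j then complex_of_real (ev d E a) * \<rho> $$ (a mod d, a mod d) else 0)"
    by (intro sum.cong refl) (auto simp: KA[OF P d r])
  also have "\<dots> = (\<Sum>j'<k. \<Sum>i<d. if (j'*d+i) div d = j then complex_of_real (ev d E (j'*d+i)) * \<rho> $$ ((j'*d+i) mod d, (j'*d+i) mod d) else 0)"
    by (rule split_sum)
  also have "\<dots> = (\<Sum>i<d. if (j*d+i) div d = j then complex_of_real (ev d E (j*d+i)) * \<rho> $$ ((j*d+i) mod d, (j*d+i) mod d) else 0)"
    using j by (intro sum_only) (auto simp: divmod_simps intro!: sum.neutral)
  also have "\<dots> = (\<Sum>i<d. E j $$ (i,i) * \<rho> $$ (i,i))"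
  proof (intro sum.cong refl)
    fix i assume "i \<in> {..<d}"
    then show "(if (j*d+i) div d = j then complex_of_real (ev d E (j*d+i)) * \<rho> $$ ((j*d+i) mod d, (j*d+i) mod d) else 0) = E j $$ (i,i) * \<rho> $$ (i,i)"
      using psd_diag_real(1)[OF pj, of i] by (simp add: divmod_simps ev_def)
  qed
  also have "\<dots> = mtrace (E j * \<rho>)"
    using pj dj r by (intro mtrace_diag[symmetric]) (auto simp: psd_def)
  finally show ?thesis .
qed

theorem lemmaS2:
  fixes d k :: nat and p :: "nat \<Rightarrow> real" and \<rho> :: "nat \<Rightarrow> complex mat"
  assumes "ensemble d k p \<rho>"
  shows "Psuc_MI d k p \<rho> = Psuc_tilde SIO d k p \<rho>
       \<and> Psuc_tilde SIO d k p \<rho> = Psuc_tilde DIO d k p \<rho>"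
proof -
  have ens: "\<And>j. j < k \<Longrightarrow> density d (\<rho> j)" "(\<Sum>j<k. p j) = 1" using assms unfolding ensemble_def by auto
  then have k: "k > 0" by (cases k) auto
  have rc: "\<And>j. j < k \<Longrightarrow> \<rho> j \<in> carrier_mat d d" using ens(1) unfolding density_def psd_def by auto
  have d: "d > 0"
  proof (rule ccontr)
    assume "\<not> d > 0"
    then have "d = 0" by simp
    then have "mtrace (\<rho> 0) = 0" using rc[OF k] unfolding mtrace_def by auto
    then show False using ens(1)[OF k] unfolding density_def by simp
  qed
  define SMI where "SMI = {(\<Sum>j<k. p j * Re (mtrace (E j * \<rho> j))) | E. incoherent_povm d k E}"
  define ST where "ST = (\<lambda>Ops. {(\<Sum>j<k. p j * Re (mtrace (kraus_apply (k * d) Ks (\<rho> j) * projB k d j))) | Ks. Ops d (k * d) Ks})"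
  have MI_sub: "SMI \<subseteq> ST Ops" if ops: "\<And>E. incoherent_povm d k E \<Longrightarrow> Ops d (k*d) (Ksc d k E)" for Ops
  proof
    fix v assume "v \<in> SMI"
    then obtain E where E: "incoherent_povm d k E" and v: "v = (\<Sum>j<k. p j * Re (mtrace (E j * \<rho> j)))"
      unfolding SMI_def by auto
    have "v = (\<Sum>j<k. p j * Re (mtrace (kraus_apply (k * d) (Ksc d k E) (\<rho> j) * projB k d j)))"
      unfolding v by (intro sum.cong refl) (simp add: Ksc_val[OF E d rc])
    then show "v \<in> ST Ops" unfolding ST_def using ops[OF E] by blast
  qed
  have sub_MI: "ST Ops \<subseteq> SMI" if ops: "\<And>Ks. Ops d (k*d) Ks \<Longrightarrow> kraus_channel d (k*d) Ks"
    and H: "\<And>Ks r a. Ops d (k*d) Ks \<Longrightarrow> r \<in> carrier_mat d d \<Longrightarrow> a < k*d \<Longrightarrow>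
        kraus_apply (k*d) Ks r $$ (a,a) = (\<Sum>i<length Ks. \<Sum>y<d. (Ks!i)$$(a,y) * r$$(y,y) * cnj ((Ks!i)$$(a,y)))" for Ops
  proof
    fix v assume "v \<in> ST Ops"
    then obtain Ks where K: "Ops d (k*d) Ks" and v: "v = (\<Sum>j<k. p j * Re (mtrace (kraus_apply (k * d) Ks (\<rho> j) * projB k d j)))"
      unfolding ST_def by auto
    have kc: "kraus_channel d (k*d) Ks" by (rule ops[OF K])
    then have car: "\<forall>K\<in>set Ks. K \<in> carrier_mat (k*d) d" unfolding kraus_channel_def by auto
    have "v = (\<Sum>j<k. p j * Re (mtrace (Ed d k Ks j * \<rho> j)))"
      unfolding v by (intro sum.cong refl) (simp add: chan_val[OF car rc H[OF K rc]])
    then show "v \<in> SMI" unfolding SMI_def using Ed_povm[OF kc] by blast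
  qed
  have e1: "SMI = ST SIO"
  proof (rule antisym)
    show "SMI \<subseteq> ST SIO" by (rule MI_sub) (rule Ksc_SIO[OF _ d])
    show "ST SIO \<subseteq> SMI"
    proof (rule sub_MI)
      fix Ks assume "SIO d (k*d) Ks" then show "kraus_channel d (k*d) Ks" unfolding SIO_def by simp
    next
      fix Ks and r :: "complex mat" and a assume "SIO d (k*d) Ks" "r \<in> carrier_mat d d" "a < k*d"
      then show "kraus_apply (k*d) Ks r $$ (a,a) = (\<Sum>i<length Ks. \<Sum>y<d. (Ks!i)$$(a,y) * r$$(y,y) * cnj ((Ks!i)$$(a,y)))"
        by (rule SIO_H)
    qed
  qed
  have e2: "SMI = ST DIO"
  proof (rule antisym)
    show "SMI \<subseteq> ST DIO" by (rule MI_sub) (rule Ksc_DIO[OF _ d])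
    show "ST DIO \<subseteq> SMI"
    proof (rule sub_MI)
      fix Ks assume "DIO d (k*d) Ks" then show "kraus_channel d (k*d) Ks" unfolding DIO_def by simp
    next
      fix Ks and r :: "complex mat" and a assume "DIO d (k*d) Ks" "r \<in> carrier_mat d d" "a < k*d"
      then show "kraus_apply (k*d) Ks r $$ (a,a) = (\<Sum>i<length Ks. \<Sum>y<d. (Ks!i)$$(a,y) * r$$(y,y) * cnj ((Ks!i)$$(a,y)))"
        by (rule DIO_H)
    qed
  qed
  have "Psuc_MI d k p \<rho> = Sup SMI" unfolding Psuc_MI_def SMI_def ..
  moreover have "Psuc_tilde SIO d k p \<rho> = Sup (ST SIO)" unfolding Psuc_tilde_def ST_def ..
  moreover have "Psuc_tilde DIO d k p \<rho> = Sup (ST DIO)" unfolding Psuc_tilde_def ST_def ..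
  ultimately show ?thesis using e1 e2 by simp
qed

end
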